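(* If $\lambda>0$, $0<x<\pi$ and $x\lambda<\pi/2$, then \[ \int_0^{x}\frac{\sin \lambda y}{\sin y}\,dy>\mathrm{Si}(\lambda\sin x), \] where $\mathrm{Si}(t)=\int_0^t\frac{\sin u}{u}\,du$. *)

theory Defs
  imports "HOL-Analysis.Analysis"
begin

text \<open>Sine integral Si t = integral from 0 to t of sin u / u (oriented; integrand at 0 is irrelevant).\<close>
definition Si :: "real \<Rightarrow> real" where
  "Si t = (if 0 \<le> t then integral {0..t} (\<lambda>u. sin u / u) else - integral {t..0} (\<lambda>u. sin u / u))"

end

theory Submission imports Defs begin
definition sx :: "real \<Rightarrow> real" where
  "sx u = (if u = 0 then 1 else sin u / u)"
lemma sx_cont: "continuous_on A sx"
proof -
  have "isCont sx u" for u
  proof (cases "u = 0")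
    case True
    have "((\<lambda>h::real. (sin (0 + h) - sin 0) / h) \<longlongrightarrow> cos 0) (at 0)"
      using DERIV_def DERIV_sin by blast
    then have "((\<lambda>h::real. sin h / h) \<longlongrightarrow> 1) (at 0)" by simp
    then have "(sx \<longlongrightarrow> 1) (at 0)"
      by (rule Lim_transform_eventually) (auto simp: sx_def eventually_at_filter)
    then show ?thesis using True by (simp add: isCont_def sx_def)
  next
    case False
    have c: "isCont (\<lambda>u. sin u / u) u" using False by (intro continuous_intros) auto
    have e: "\<forall>\<^sub>F y in nhds u. sin y / y = sx y"
      using eventually_nhds_in_open[of "-{0}" u] False
      by (auto elim!: eventually_mono simp: sx_def)
    show ?thesis
      using isCont_cong[OF e] c by simp
  qed
  then show ?thesis by (simp add: continuous_at_imp_continuous_on)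
qed
lemma sin_lt: assumes "0 < y" "y < pi" shows "sin y < (y::real)"
proof -
  have "sin y = 2 * sin (y/2) * cos (y/2)" using sin_double[of "y/2"] by simp
  moreover have "sin (y/2) \<le> y/2" using sin_x_le_x[of "y/2"] assms by simp
  moreover have "sin (y/2) > 0" using assms by (intro sin_gt_zero) auto
  moreover have "cos (y/2) < 1" using assms cos_monotone_0_pi[of 0 "y/2"] by simp
  ultimately have "sin y < 2 * sin (y/2) * 1"
    by (metis mult_less_cancel_left_pos zero_less_mult_iff zero_less_numeral)
  with \<open>sin (y/2) \<le> y/2\<close> show ?thesis by simp
qed
lemma sx_comp: "continuous_on S (\<lambda>y. sx (c * y))"
  using continuous_on_compose[of S "\<lambda>y. c*y" sx] sx_cont
  by (auto simp: o_def intro: continuous_intros)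

lemma sx_pos: assumes "0 \<le> u" "u < pi" shows "sx u > 0"
  using assms sin_gt_zero[of u] by (auto simp: sx_def)

theorem proposition9:
  fixes lam x :: real
  assumes "lam > 0" and "0 < x" and "x < pi" and "x * lam < pi / 2"
  shows "integral {0..x} (\<lambda>y. sin (lam * y) / sin y) > Si (lam * sin x)"
proof -
  define q where "q y = lam * sx (lam * y) / sx y" for y
  have lx: "lam * x < pi/2" using assms by (simp add: mult.commute)
  have sxne: "sx y \<noteq> 0" if "y \<in> {0..x}" for y
    using sx_pos[of y] that assms by auto
  have qc: "continuous_on {0..x} q" unfolding q_def
    by (intro continuous_intros sx_comp
           sx_cont) (use sxne in auto)
  have qeq: "q y = sin (lam * y) / sin y" if "y \<in> {0..x} - {0}" for y
    using that assms by (auto simp: q_def sx_def field_simps)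
  have I1: "integral {0..x} (\<lambda>y. sin (lam * y) / sin y) = integral {0..x} q"
    by (rule integral_spike[of "{0}"]) (use qeq in auto)
  have sxpos: "0 \<le> sin x" using assms by (simp add: sin_ge_zero)
  have sinle: "lam * sin x \<le> lam * x" using sin_x_le_x[of x] assms by simp
  have I2: "Si (lam * sin x) = integral {0..lam * sin x} sx"
    unfolding Si_def using sxpos assms
    by (auto intro!: integral_spike[of "{0}"] simp: sx_def split: if_splits)
  have I3: "integral {0..lam * sin x} sx \<le> integral {0..lam * x} sx"
  proof -
    have "integral {0..lam * x} sx = integral {0..lam * sin x} sx + integral {lam * sin x..lam*x} sx"
      by (rule Henstock_Kurzweil_Integration.integral_combine[symmetric]) (use sxpos assms sinle in
          \<open>auto intro: integrable_continuous_real sx_cont\<close>)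
    moreover have "integral {lam * sin x..lam*x} sx \<ge> 0"
      proof (rule integral_nonneg)
      show "sx integrable_on {lam * sin x..lam * x}" by (intro integrable_continuous_real sx_cont)
      fix u assume u: "u \<in> {lam * sin x..lam * x}"
      have "0 \<le> lam * sin x" using sxpos assms by simp
      with u lx have "0 \<le> u" "u < pi" by auto
      then show "0 \<le> sx u" using sx_pos less_imp_le by blast
    qed
    ultimately show ?thesis by simp
  qed
  have I4: "((\<lambda>y. lam *\<^sub>R sx (lam * y)) has_integral integral {lam * 0..lam * x} sx) {0..x}"
    by (rule has_integral_substitution[where c=0 and d="lam*x"])
       (use assms in \<open>auto intro!: derivative_eq_intros sx_cont mult_left_mono\<close>)
  have I5: "integral {0..x} (\<lambda>y. lam * sx (lam * y)) < integral {0..x} q"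
  proof (rule integral_less_real)
    show "continuous_on {0..x} (\<lambda>y. lam * sx (lam * y))"
      by (intro continuous_intros sx_comp)
    show "continuous_on {0..x} q" by (rule qc)
    show "{0<..<x} \<noteq> {}" using assms by auto
    fix y assume y: "y \<in> {0<..<x}"
    have ly: "lam * y < pi/2" using y lx assms by (smt (verit) mult_strict_left_mono greaterThanLessThan_iff)
    have s1: "sin (lam * y) > 0" using y assms ly by (intro sin_gt_zero) auto
    have s2: "sin y > 0" using y assms by (intro sin_gt_zero) auto
    have s3: "sin y < y" using y assms by (intro sin_lt) auto
    have "lam * sx (lam * y) = sin (lam * y) / y" using y assms by (auto simp: sx_def)
    also have "\<dots> < sin (lam * y) / sin y"
      using s1 s2 s3 by (intro divide_strict_left_mono) auto
    also have "\<dots> = q y" using qeq[of y] y by auto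
    finally show "lam * sx (lam * y) < q y" .
  qed
  have "Si (lam * sin x) \<le> integral {0..x} (\<lambda>y. lam * sx (lam * y))"
    using I2 I3 integral_unique[OF I4] by (simp del: integral_mult_right)
  then show ?thesis using I1 I5 by simp
qed

end
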